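(* Let $G$ be a Garside group with Garside element $\Delta$, let $g\in G$, and let $a,b,k$ be nonzero integers. (i) If $g^{kb}$ is conjugate to $\Delta^{ka}$, then $g^b$ is conjugate to $\Delta^a$. (ii) If each of $g^a$ and $g^b$ is conjugate to a power of $\Delta$, then $g^{\gcd(a,b)}$ is conjugate to a power of $\Delta$.
   Context: $G$ is a Garside group: the group of fractions of a Garside monoid $G^+$ (an atomic, left and right cancellative monoid that is a lattice under both the prefix order and the suffix order, with a distinguished element $\Delta$, the Garside element, whose left and right divisors coincide, form a finite set, and generate $G^+$). *)

theory Defs
  imports "HOL-Algebra.Group"
begin

text \<open>Garside groups, presented as a group G together with a positive submonoid P
  (the Garside monoid G+) and a Garside element D, such that G is the group of
  fractions of P.\<close>

definition left_div :: "('a, 'b) monoid_scheme \<Rightarrow> 'a set \<Rightarrow> 'a \<Rightarrow> 'a \<Rightarrow> bool" where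
  "left_div G P x y \<longleftrightarrow> x \<in> P \<and> y \<in> P \<and> (\<exists>c\<in>P. y = x \<otimes>\<^bsub>G\<^esub> c)"

definition right_div :: "('a, 'b) monoid_scheme \<Rightarrow> 'a set \<Rightarrow> 'a \<Rightarrow> 'a \<Rightarrow> bool" where
  "right_div G P x y \<longleftrightarrow> x \<in> P \<and> y \<in> P \<and> (\<exists>c\<in>P. y = c \<otimes>\<^bsub>G\<^esub> x)"

definition lattice_on :: "'a set \<Rightarrow> ('a \<Rightarrow> 'a \<Rightarrow> bool) \<Rightarrow> bool" where
  "lattice_on P r \<longleftrightarrow>
     (\<forall>x\<in>P. \<forall>y\<in>P.
        (\<exists>j\<in>P. r x j \<and> r y j \<and> (\<forall>z\<in>P. r x z \<and> r y z \<longrightarrow> r j z)) \<and>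
        (\<exists>m\<in>P. r m x \<and> r m y \<and> (\<forall>z\<in>P. r z x \<and> r z y \<longrightarrow> r z m)))"

definition atomic_monoid :: "('a, 'b) monoid_scheme \<Rightarrow> 'a set \<Rightarrow> bool" where
  "atomic_monoid G P \<longleftrightarrow>
     (\<exists>\<nu> :: 'a \<Rightarrow> nat. (\<forall>x\<in>P. \<forall>y\<in>P. \<nu> (x \<otimes>\<^bsub>G\<^esub> y) \<ge> \<nu> x + \<nu> y) \<and>
                      (\<forall>x\<in>P. x \<noteq> \<one>\<^bsub>G\<^esub> \<longrightarrow> \<nu> x > 0))"

definition garside_group :: "('a, 'b) monoid_scheme \<Rightarrow> 'a set \<Rightarrow> 'a \<Rightarrow> bool" where
  "garside_group G P D \<longleftrightarrow>
     group G \<and>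
     P \<subseteq> carrier G \<and> \<one>\<^bsub>G\<^esub> \<in> P \<and> (\<forall>x\<in>P. \<forall>y\<in>P. x \<otimes>\<^bsub>G\<^esub> y \<in> P) \<and>
     atomic_monoid G P \<and>
     lattice_on P (left_div G P) \<and> lattice_on P (right_div G P) \<and>
     D \<in> P \<and>
     {x. left_div G P x D} = {x. right_div G P x D} \<and>
     finite {x. left_div G P x D} \<and>
     (\<forall>x\<in>P. \<exists>xs. set xs \<subseteq> {y. left_div G P y D} \<and> x = foldr (\<otimes>\<^bsub>G\<^esub>) xs \<one>\<^bsub>G\<^esub>) \<and>
     carrier G = {p \<otimes>\<^bsub>G\<^esub> inv\<^bsub>G\<^esub> q | p q. p \<in> P \<and> q \<in> P}"

definition conjugate :: "('a, 'b) monoid_scheme \<Rightarrow> 'a \<Rightarrow> 'a \<Rightarrow> bool" where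
  "conjugate G x y \<longleftrightarrow> (\<exists>h\<in>carrier G. h \<otimes>\<^bsub>G\<^esub> x \<otimes>\<^bsub>G\<^esub> inv\<^bsub>G\<^esub> h = y)"

end

theory Submission
  imports Defs
begin


locale garside =
  fixes G (structure) and P and D
  assumes gg: "garside_group G P D"
begin

sublocale group G using gg unfolding garside_group_def by blast

abbreviation "Dv \<equiv> {x. left_div G P x D}"

lemma invc1[simp]: "x \<in> carrier G \<Longrightarrow> y \<in> carrier G \<Longrightarrow> inv x \<otimes> (x \<otimes> y) = y"
  by (simp add: m_assoc[symmetric])
lemma invc2[simp]: "x \<in> carrier G \<Longrightarrow> y \<in> carrier G \<Longrightarrow> x \<otimes> (inv x \<otimes> y) = y"
  by (simp add: m_assoc[symmetric])

lemma PG: "P \<subseteq> carrier G" using gg unfolding garside_group_def by blast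
lemma Pc: "x \<in> P \<Longrightarrow> x \<in> carrier G" using PG by blast
lemma oneP: "\<one> \<in> P" using gg unfolding garside_group_def by blast
lemma multP: "x \<in> P \<Longrightarrow> y \<in> P \<Longrightarrow> x \<otimes> y \<in> P" using gg unfolding garside_group_def by blast
lemma DP: "D \<in> P" using gg unfolding garside_group_def by blast
lemma Dc: "D \<in> carrier G" using DP Pc by blast
lemma DivEq: "Dv = {x. right_div G P x D}" using gg unfolding garside_group_def by blast
lemma finDiv: "finite Dv" using gg unfolding garside_group_def by blast
lemma gen: "x \<in> P \<Longrightarrow> \<exists>xs. set xs \<subseteq> Dv \<and> x = foldr (\<otimes>) xs \<one>"
  using gg unfolding garside_group_def by blast
lemma carr: "carrier G = {p \<otimes> inv q | p q. p \<in> P \<and> q \<in> P}"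
  using gg unfolding garside_group_def by blast
lemma latL: "lattice_on P (left_div G P)" using gg unfolding garside_group_def by blast

lemma unitP: assumes "w \<in> P" "inv w \<in> P" shows "w = \<one>"
proof -
  obtain \<nu> :: "'a \<Rightarrow> nat" where n1: "\<forall>x\<in>P. \<forall>y\<in>P. \<nu> (x \<otimes> y) \<ge> \<nu> x + \<nu> y"
    and n2: "\<forall>x\<in>P. x \<noteq> \<one> \<longrightarrow> \<nu> x > 0"
    using gg unfolding garside_group_def atomic_monoid_def by blast
  have "\<nu> (\<one> \<otimes> \<one>) \<ge> \<nu> \<one> + \<nu> \<one>" using n1 oneP by blast
  hence z: "\<nu> \<one> = 0" by simp
  have "\<nu> (w \<otimes> inv w) \<ge> \<nu> w + \<nu> (inv w)" using n1 assms by blast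
  hence "\<nu> w = 0" using z assms Pc by simp
  thus ?thesis using n2 assms by auto
qed

lemma Div_P: "x \<in> Dv \<Longrightarrow> x \<in> P" by (simp add: left_div_def)

lemma foldrP: "set xs \<subseteq> P \<Longrightarrow> foldr (\<otimes>) xs \<one> \<in> P"
  by (induction xs) (auto simp: oneP multP)

lemma conjP:
  assumes w: "w \<in> carrier G" and h: "\<And>s. s \<in> Dv \<Longrightarrow> w \<otimes> s \<otimes> inv w \<in> Dv"
    and p: "p \<in> P" shows "w \<otimes> p \<otimes> inv w \<in> P"
proof -
  obtain xs where xs: "set xs \<subseteq> Dv" "p = foldr (\<otimes>) xs \<one>" using gen p by blast
  have "w \<otimes> foldr (\<otimes>) xs \<one> \<otimes> inv w \<in> P" using xs(1)
  proof (induction xs)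
    case Nil then show ?case using w by (simp add: oneP)
  next
    case (Cons s xs)
    hence sc: "s \<in> carrier G" using Div_P Pc by auto
    have fc: "foldr (\<otimes>) xs \<one> \<in> carrier G" using Cons.prems foldrP[of xs] Div_P Pc by auto
    have "w \<otimes> foldr (\<otimes>) (s # xs) \<one> \<otimes> inv w = (w \<otimes> s \<otimes> inv w) \<otimes> (w \<otimes> foldr (\<otimes>) xs \<one> \<otimes> inv w)"
      using sc fc w by (simp add: m_assoc)
    moreover have "w \<otimes> s \<otimes> inv w \<in> P" using h Cons.prems Div_P by auto
    ultimately show ?case using Cons multP by auto
  qed
  thus ?thesis using xs by simp
qed

lemma tauDiv: assumes s: "s \<in> Dv" shows "D \<otimes> s \<otimes> inv D \<in> Dv"
proof -
  have "right_div G P s D" using s DivEq by blast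
  then obtain c where c: "c \<in> P" "D = c \<otimes> s" unfolding right_div_def by blast
  have sP: "s \<in> P" using s Div_P by blast
  have "left_div G P c D" using c sP DP unfolding left_div_def by blast
  hence "right_div G P c D" using DivEq by blast
  then obtain c2 where c2: "c2 \<in> P" "D = c2 \<otimes> c" unfolding right_div_def by blast
  have cc: "c \<in> carrier G" "c2 \<in> carrier G" "s \<in> carrier G" using c c2 sP Pc by auto
  have "D \<otimes> s \<otimes> inv D = c2 \<otimes> (c \<otimes> s) \<otimes> inv D" using c2 cc by (simp add: m_assoc)
  also have "\<dots> = c2" using c cc Dc by (simp add: m_assoc)
  finally have "D \<otimes> s \<otimes> inv D = c2" .
  moreover have "left_div G P c2 D" using c2 c DP unfolding left_div_def by auto
  ultimately show ?thesis by simp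
qed

lemma tauDiv': assumes s: "s \<in> Dv" shows "inv D \<otimes> s \<otimes> D \<in> Dv"
proof -
  obtain c where c: "c \<in> P" "D = s \<otimes> c" using s unfolding left_div_def by blast
  have sP: "s \<in> P" using s Div_P by blast
  have "right_div G P c D" using c sP DP unfolding right_div_def by blast
  hence "left_div G P c D" using DivEq by blast
  then obtain c2 where c2: "c2 \<in> P" "D = c \<otimes> c2" unfolding left_div_def by blast
  have cc: "c \<in> carrier G" "c2 \<in> carrier G" "s \<in> carrier G" using c c2 sP Pc by auto
  have "inv D \<otimes> s \<otimes> D = inv D \<otimes> s \<otimes> (c \<otimes> c2)" using c2 by simp
  also have "\<dots> = inv c \<otimes> inv s \<otimes> s \<otimes> c \<otimes> c2" using cc Dc c by (simp add: m_assoc inv_mult_group)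
  also have "\<dots> = c2" using cc by (simp add: m_assoc)
  finally have "inv D \<otimes> s \<otimes> D = c2" .
  moreover have "right_div G P c2 D" using c2 c DP unfolding right_div_def by blast
  ultimately show ?thesis using DivEq by simp
qed

end


context garside begin

lemma tauDivPow: "s \<in> Dv \<Longrightarrow> D [^] (n::nat) \<otimes> s \<otimes> inv (D [^] n) \<in> Dv"
proof (induction n arbitrary: s)
  case 0 then show ?case using Div_P Pc by simp
next
  case (Suc n)
  have sc: "s \<in> carrier G" using Suc.prems Div_P Pc by blast
  have "D [^] Suc n \<otimes> s \<otimes> inv (D [^] Suc n) = D [^] n \<otimes> (D \<otimes> s \<otimes> inv D) \<otimes> inv (D [^] n)"
    using sc Dc by (simp add: m_assoc inv_mult_group)
  thus ?case using Suc.IH tauDiv Suc.prems by simp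
qed

lemma tauDivPow': "s \<in> Dv \<Longrightarrow> inv (D [^] (n::nat)) \<otimes> s \<otimes> inv (inv (D [^] n)) \<in> Dv"
proof (induction n arbitrary: s)
  case 0 then show ?case using Div_P Pc by simp
next
  case (Suc n)
  have sc: "s \<in> carrier G" using Suc.prems Div_P Pc by blast
  have "inv (D [^] Suc n) \<otimes> s \<otimes> inv (inv (D [^] Suc n)) = inv D \<otimes> (inv (D [^] n) \<otimes> s \<otimes> inv (inv (D [^] n))) \<otimes> D"
    using sc Dc by (simp add: m_assoc inv_mult_group)
  thus ?case using Suc.IH tauDiv' Suc.prems Div_P Pc by simp
qed

lemma tauP: assumes "p \<in> P" shows "D [^] (n::int) \<otimes> p \<otimes> inv (D [^] n) \<in> P"
proof (cases "n \<ge> 0")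
  case True
  then obtain m where m: "n = int m" by (metis nonneg_eq_int)
  show ?thesis unfolding m int_pow_int using conjP[OF _ tauDivPow assms] Dc by simp
next
  case False
  then obtain m where m: "n = - int m" by (metis nonneg_eq_int neg_0_le_iff_le minus_minus le_cases)
  have "inv (D [^] m) \<otimes> p \<otimes> inv (inv (D [^] m)) \<in> P"
    using conjP[OF _ tauDivPow' assms] Dc by simp
  thus ?thesis unfolding m using Dc by (simp add: int_pow_neg_int)
qed

lemma centDv: "\<exists>e::nat. e > 0 \<and> (\<forall>s\<in>Dv. D [^] e \<otimes> s = s \<otimes> D [^] e)"
proof -
  define f where "f n = restrict (\<lambda>s. D [^] (n::nat) \<otimes> s \<otimes> inv (D [^] n)) Dv" for n
  have "f n \<in> Dv \<rightarrow>\<^sub>E Dv" for n unfolding f_def using tauDivPow by (simp add: restrict_PiE_iff)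
  hence "f ` UNIV \<subseteq> Dv \<rightarrow>\<^sub>E Dv" by blast
  moreover have "finite (Dv \<rightarrow>\<^sub>E Dv)" using finDiv by (simp add: finite_PiE)
  ultimately have "finite (f ` UNIV)" using finite_subset by blast
  then obtain a0 where inf: "\<not> finite {a. f a = f a0}"
    using pigeonhole_infinite[of "UNIV::nat set" f] by auto
  have "\<not> (\<forall>n\<in>{a. f a = f a0}. n \<le> a0)" using inf finite_nat_set_iff_bounded_le by blast
  then obtain j where j: "j > a0" "f j = f a0" using not_le by blast
  define e where "e = j - a0"
  have e: "e > 0" "j = a0 + e" using j unfolding e_def by auto
  have "\<forall>s\<in>Dv. D [^] e \<otimes> s = s \<otimes> D [^] e"
  proof
    fix s assume s: "s \<in> Dv"
    have sc: "s \<in> carrier G" using s Div_P Pc by blast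
    have "D [^] j \<otimes> s \<otimes> inv (D [^] j) = D [^] a0 \<otimes> s \<otimes> inv (D [^] a0)"
      using fun_cong[OF j(2), of s] s unfolding f_def by simp
    hence "D [^] a0 \<otimes> (D [^] e \<otimes> s \<otimes> inv (D [^] e)) \<otimes> inv (D [^] a0) = D [^] a0 \<otimes> s \<otimes> inv (D [^] a0)"
      unfolding e(2) using sc Dc by (simp add: nat_pow_mult[symmetric] m_assoc inv_mult_group)
    hence "D [^] e \<otimes> s \<otimes> inv (D [^] e) = s" using sc Dc by simp
    thus "D [^] e \<otimes> s = s \<otimes> D [^] e" using sc Dc
    proof -
      have "D [^] e \<otimes> s \<otimes> inv (D [^] e) \<otimes> D [^] e = s \<otimes> D [^] e" using \<open>D [^] e \<otimes> s \<otimes> inv (D [^] e) = s\<close> by simp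
      thus ?thesis using sc Dc by (simp add: m_assoc)
    qed
  qed
  thus ?thesis using e by blast
qed

lemma central: "\<exists>e::nat. e > 0 \<and> (\<forall>x\<in>carrier G. D [^] e \<otimes> x = x \<otimes> D [^] e)"
proof -
  obtain e :: nat where e: "e > 0" "\<forall>s\<in>Dv. D [^] e \<otimes> s = s \<otimes> D [^] e" using centDv by blast
  have de: "D [^] e \<in> carrier G" using Dc by simp
  have P1: "D [^] e \<otimes> p = p \<otimes> D [^] e" if p: "p \<in> P" for p
  proof -
    obtain xs where xs: "set xs \<subseteq> Dv" "p = foldr (\<otimes>) xs \<one>" using gen p by blast
    have "D [^] e \<otimes> foldr (\<otimes>) xs \<one> = foldr (\<otimes>) xs \<one> \<otimes> D [^] e" using xs(1)
    proof (induction xs)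
      case Nil then show ?case using de by simp
    next
      case (Cons s xs)
      hence sc: "s \<in> carrier G" using Div_P Pc by auto
      have fc: "foldr (\<otimes>) xs \<one> \<in> carrier G" using Cons.prems foldrP[of xs] Div_P Pc by auto
      have "D [^] e \<otimes> (s \<otimes> foldr (\<otimes>) xs \<one>) = (D [^] e \<otimes> s) \<otimes> foldr (\<otimes>) xs \<one>"
        using sc fc de by (simp add: m_assoc)
      also have "\<dots> = s \<otimes> (D [^] e \<otimes> foldr (\<otimes>) xs \<one>)" using e Cons sc fc de by (simp add: m_assoc)
      also have "\<dots> = (s \<otimes> foldr (\<otimes>) xs \<one>) \<otimes> D [^] e" using Cons sc fc de by (simp add: m_assoc)
      finally show ?case by simp
    qed
    thus ?thesis using xs by simp
  qed
  have "D [^] e \<otimes> x = x \<otimes> D [^] e" if x: "x \<in> carrier G" for x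
  proof -
    obtain p q where pq: "p \<in> P" "q \<in> P" "x = p \<otimes> inv q" using x carr by blast
    have pc: "p \<in> carrier G" "q \<in> carrier G" using pq Pc by auto
    have iq: "D [^] e \<otimes> inv q = inv q \<otimes> D [^] e"
    proof -
      have "inv q \<otimes> (D [^] e \<otimes> q) \<otimes> inv q = inv q \<otimes> (q \<otimes> D [^] e) \<otimes> inv q" using P1 pq by simp
      thus ?thesis using pc de by (simp add: m_assoc)
    qed
    show ?thesis unfolding pq(3) using pc de P1[OF pq(1)] iq
      by (simp add: m_assoc[symmetric]) (simp add: m_assoc)
  qed
  thus ?thesis using e by blast
qed

end


context garside begin

lemma powP: "D [^] (n::nat) \<in> P"
  by (induction n) (auto simp: oneP multP DP)

lemma L5a: assumes q: "q \<in> P" shows "\<exists>r\<in>P. \<exists>m::nat. r \<otimes> q = D [^] m"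
proof -
  obtain e :: nat where e: "e > 0" "\<forall>x\<in>carrier G. D [^] e \<otimes> x = x \<otimes> D [^] e" using central by blast
  obtain xs where xs: "set xs \<subseteq> Dv" "q = foldr (\<otimes>) xs \<one>" using gen q by blast
  have "\<exists>r\<in>P. \<exists>m::nat. r \<otimes> foldr (\<otimes>) xs \<one> = D [^] m" using xs(1)
  proof (induction xs)
    case Nil then show ?case using oneP by (intro bexI[of _ \<one>] exI[of _ 0]) auto
  next
    case (Cons s xs)
    then obtain r' and m' :: nat where r': "r' \<in> P" "r' \<otimes> foldr (\<otimes>) xs \<one> = D [^] m'" by auto
    have "right_div G P s D" using Cons.prems DivEq by auto
    then obtain u where u: "u \<in> P" "D = u \<otimes> s" unfolding right_div_def by blast
    have sc: "s \<in> carrier G" using Cons.prems Div_P Pc by auto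
    have fc: "foldr (\<otimes>) xs \<one> \<in> carrier G" using Cons.prems foldrP[of xs] Div_P Pc by auto
    have uc: "u \<in> carrier G" "r' \<in> carrier G" using u r' Pc by auto
    define r where "r = r' \<otimes> D [^] (e - 1) \<otimes> u"
    have rP: "r \<in> P" unfolding r_def using r' u powP multP by auto
    have de: "D [^] (e - 1) \<otimes> (u \<otimes> s) = D [^] e"
    proof -
      have "D [^] (e - 1) \<otimes> (u \<otimes> s) = D [^] (Suc (e - 1))" using u(2) by simp
      thus ?thesis using e(1) by simp
    qed
    have "r \<otimes> foldr (\<otimes>) (s # xs) \<one> = r' \<otimes> (D [^] (e - 1) \<otimes> (u \<otimes> s)) \<otimes> foldr (\<otimes>) xs \<one>"
      unfolding r_def using sc fc uc Dc by (simp add: m_assoc)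
    also have "\<dots> = r' \<otimes> D [^] e \<otimes> foldr (\<otimes>) xs \<one>" unfolding de ..
    also have "r' \<otimes> D [^] e \<otimes> foldr (\<otimes>) xs \<one> = r' \<otimes> foldr (\<otimes>) xs \<one> \<otimes> D [^] e"
    proof -
      have "D [^] e \<otimes> foldr (\<otimes>) xs \<one> = foldr (\<otimes>) xs \<one> \<otimes> D [^] e" using e(2) fc by blast
      thus ?thesis using fc uc Dc by (simp add: m_assoc)
    qed
    also have "\<dots> = D [^] (m' + e)" using r' Dc by (simp add: nat_pow_mult)
    finally show ?case using rP by blast
  qed
  thus ?thesis using xs by simp
qed

lemma L5: assumes x: "x \<in> carrier G" shows "\<exists>M::nat. D [^] M \<otimes> x \<in> P"
proof -
  obtain e :: nat where e: "e > 0" "\<forall>x\<in>carrier G. D [^] e \<otimes> x = x \<otimes> D [^] e" using central by blast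
  obtain p q where pq: "p \<in> P" "q \<in> P" "x = p \<otimes> inv q" using x carr by blast
  have pc: "p \<in> carrier G" "q \<in> carrier G" using pq Pc by auto
  obtain r m where rm: "r \<in> P" "r \<otimes> q = D [^] (m::nat)" using L5a pq by blast
  have rc: "r \<in> carrier G" using rm Pc by auto
  have cm: "D [^] (e * m) \<otimes> y = y \<otimes> D [^] (e * m)" if yc: "y \<in> carrier G" for y
  proof -
    have c: "D [^] e \<otimes> y = y \<otimes> D [^] e" using e(2) yc by blast
    show ?thesis using group_commutes_pow[OF c _ yc, of m] Dc by (simp add: nat_pow_pow)
  qed
  have em: "e * m = (e - 1) * m + m" using e(1) by (cases e) auto
  have "D [^] (e * m) = D [^] ((e - 1) * m) \<otimes> D [^] m" using Dc
    by (simp only: em nat_pow_mult)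
  have cp: "D [^] (e * m) \<otimes> p = p \<otimes> D [^] (e * m)" using cm pc by blast
  have "D [^] (e * m) \<otimes> x = (D [^] (e * m) \<otimes> p) \<otimes> inv q"
    unfolding pq(3) using pc Dc by (simp add: m_assoc)
  also have "\<dots> = p \<otimes> (D [^] (e * m) \<otimes> inv q)" unfolding cp using pc Dc by (simp add: m_assoc)
  also have "\<dots> = p \<otimes> (D [^] ((e - 1) * m) \<otimes> D [^] m \<otimes> inv q)" using \<open>D [^] (e * m) = _\<close> by simp
  also have "\<dots> = p \<otimes> (D [^] ((e - 1) * m) \<otimes> (r \<otimes> q) \<otimes> inv q)" using rm by simp
  finally have "D [^] (e * m) \<otimes> x = p \<otimes> (D [^] ((e - 1) * m) \<otimes> (r \<otimes> q) \<otimes> inv q)" .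
  also have "\<dots> = p \<otimes> (D [^] ((e - 1) * m) \<otimes> r)" using pc rc Dc by (simp add: m_assoc)
  finally have "D [^] (e * m) \<otimes> x \<in> P" using pq rm powP multP by simp
  thus ?thesis by blast
qed

lemma L5b: assumes "finite S" "S \<subseteq> carrier G" shows "\<exists>M::nat. \<forall>x\<in>S. D [^] M \<otimes> x \<in> P"
  using assms
proof (induction S rule: finite_induct)
  case empty then show ?case by simp
next
  case (insert x F)
  then obtain M :: nat where M: "\<forall>y\<in>F. D [^] M \<otimes> y \<in> P" by auto
  obtain N where N: "D [^] (N::nat) \<otimes> x \<in> P" using L5[of x] insert.prems by auto
  have mono: "D [^] (A + B) \<otimes> y \<in> P" if "D [^] (A::nat) \<otimes> y \<in> P" "y \<in> carrier G" for A B y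
  proof -
    have "D [^] (A + B) \<otimes> y = (D [^] B \<otimes> D [^] A) \<otimes> y" using nat_pow_mult[of D B A] Dc
      by (simp add: add.commute)
    also have "\<dots> = D [^] B \<otimes> (D [^] A \<otimes> y)" by (rule m_assoc) (use Dc that in auto)
    finally have "D [^] (A + B) \<otimes> y = D [^] B \<otimes> (D [^] A \<otimes> y)" .
    thus ?thesis using that powP multP by simp
  qed
  have "\<forall>y\<in>insert x F. D [^] (M + N) \<otimes> y \<in> P"
    using mono[OF N, of M] mono[of M _ N] M insert.prems by (auto simp: add.commute)
  thus ?case by blast
qed

lemma ld_trans: "left_div G P x y \<Longrightarrow> left_div G P y z \<Longrightarrow> left_div G P x z"
proof -
  assume a: "left_div G P x y" "left_div G P y z"
  then obtain c d where cd: "c \<in> P" "y = x \<otimes> c" "d \<in> P" "z = y \<otimes> d" "x \<in> P" "z \<in> P"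
    unfolding left_div_def by blast
  have "z = x \<otimes> (c \<otimes> d)" using cd Pc by (simp add: m_assoc)
  thus ?thesis using cd multP unfolding left_div_def by blast
qed

lemma L6: assumes "finite S" "S \<noteq> {}" "S \<subseteq> P"
  shows "\<exists>L\<in>P. (\<forall>s\<in>S. left_div G P s L) \<and> (\<forall>z\<in>P. (\<forall>s\<in>S. left_div G P s z) \<longrightarrow> left_div G P L z)"
  using assms
proof (induction S rule: finite_ne_induct)
  case (singleton x)
  have "left_div G P x x" using singleton oneP Pc unfolding left_div_def by (auto intro!: bexI[of _ \<one>])
  then show ?case using singleton by auto
next
  case (insert x F)
  then obtain L where L: "L \<in> P" "\<forall>s\<in>F. left_div G P s L" "\<forall>z\<in>P. (\<forall>s\<in>F. left_div G P s z) \<longrightarrow> left_div G P L z"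
    by auto
  obtain j where j: "j \<in> P" "left_div G P x j" "left_div G P L j"
     "\<forall>z\<in>P. left_div G P x z \<and> left_div G P L z \<longrightarrow> left_div G P j z"
    using latL insert.prems L(1) unfolding lattice_on_def by blast
  show ?case
  proof (rule bexI[of _ j])
    show "(\<forall>s\<in>insert x F. left_div G P s j) \<and> (\<forall>z\<in>P. (\<forall>s\<in>insert x F. left_div G P s z) \<longrightarrow> left_div G P j z)"
    proof (intro conjI ballI impI)
      fix s assume "s \<in> insert x F"
      thus "left_div G P s j" using j(2) ld_trans[OF _ j(3)] L(2) by blast
    next
      fix z assume z: "z \<in> P" "\<forall>s\<in>insert x F. left_div G P s z"
      hence "left_div G P L z" using L(3) by blast
      thus "left_div G P j z" using j(4) z by blast
    qed
  qed (rule j(1))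
qed

lemma L7: assumes "finite S" "S \<noteq> {}" "S \<subseteq> carrier G"
  shows "\<exists>J\<in>carrier G. (\<forall>s\<in>S. inv s \<otimes> J \<in> P) \<and> (\<forall>z\<in>carrier G. (\<forall>s\<in>S. inv s \<otimes> z \<in> P) \<longrightarrow> inv J \<otimes> z \<in> P)"
proof -
  obtain M :: nat where M: "\<forall>x\<in>S. D [^] M \<otimes> x \<in> P" using L5b assms by blast
  let ?T = "(\<lambda>x. D [^] M \<otimes> x) ` S"
  obtain L where L: "L \<in> P" "\<forall>s\<in>?T. left_div G P s L" "\<forall>z\<in>P. (\<forall>s\<in>?T. left_div G P s z) \<longrightarrow> left_div G P L z"
    using L6[of ?T] assms M by auto
  have Lc: "L \<in> carrier G" using L Pc by auto
  have dm: "D [^] M \<in> carrier G" using Dc by simp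
  define J where "J = inv (D [^] M) \<otimes> L"
  have Jc: "J \<in> carrier G" unfolding J_def using Lc dm by simp
  have ub: "inv s \<otimes> J \<in> P" if s: "s \<in> S" for s
  proof -
    have sc: "s \<in> carrier G" using s assms by auto
    obtain c where c: "c \<in> P" "L = D [^] M \<otimes> s \<otimes> c" using L(2) s unfolding left_div_def by blast
    have "inv s \<otimes> J = c" unfolding J_def c(2) using sc dm c Pc by (simp add: m_assoc)
    thus ?thesis using c by simp
  qed
  have least: "inv J \<otimes> z \<in> P" if z: "z \<in> carrier G" "\<forall>s\<in>S. inv s \<otimes> z \<in> P" for z
  proof -
    have zP: "D [^] M \<otimes> z \<in> P"
    proof -
      obtain s where s: "s \<in> S" using assms by auto
      have sc: "s \<in> carrier G" using s assms by auto
      have "D [^] M \<otimes> z = (D [^] M \<otimes> s) \<otimes> (inv s \<otimes> z)" using sc z dm by (simp add: m_assoc)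
      thus ?thesis using M s z multP by simp
    qed
    have "\<forall>t\<in>?T. left_div G P t (D [^] M \<otimes> z)"
    proof
      fix t assume "t \<in> ?T"
      then obtain s where s: "s \<in> S" "t = D [^] M \<otimes> s" by blast
      have sc: "s \<in> carrier G" using s assms by auto
      have "D [^] M \<otimes> z = t \<otimes> (inv s \<otimes> z)" using s sc z dm by (simp add: m_assoc)
      thus "left_div G P t (D [^] M \<otimes> z)" using s M z zP unfolding left_div_def by blast
    qed
    then obtain c where c: "c \<in> P" "D [^] M \<otimes> z = L \<otimes> c" using L(3) zP unfolding left_div_def by blast
    have "inv J \<otimes> z = inv L \<otimes> (D [^] M \<otimes> z)" unfolding J_def using Lc dm z
      by (simp add: inv_mult_group m_assoc)
    also have "\<dots> = c" using c Lc Pc by simp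
    finally show ?thesis using c by simp
  qed
  show ?thesis using Jc ub least by blast
qed

end


context garside begin

lemma conj_pow_nat: "h \<in> carrier G \<Longrightarrow> x \<in> carrier G \<Longrightarrow>
   (h \<otimes> x \<otimes> inv h) [^] (n::nat) = h \<otimes> x [^] n \<otimes> inv h"
proof (induction n)
  case 0 then show ?case by simp
next
  case (Suc n)
  then show ?case by (simp add: m_assoc)
qed

lemma conj_pow: assumes "h \<in> carrier G" "x \<in> carrier G"
  shows "(h \<otimes> x \<otimes> inv h) [^] (i::int) = h \<otimes> x [^] i \<otimes> inv h"
proof (cases "i \<ge> 0")
  case True
  then obtain n where "i = int n" by (metis nonneg_eq_int)
  thus ?thesis using conj_pow_nat[OF assms] by (simp add: int_pow_int)
next
  case False
  then obtain n where n: "i = - int n" by (metis nonneg_eq_int neg_0_le_iff_le minus_minus le_cases)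
  have "inv (h \<otimes> x [^] n \<otimes> inv h) = h \<otimes> inv (x [^] n) \<otimes> inv h"
    using assms by (simp add: inv_mult_group m_assoc)
  thus ?thesis unfolding n using conj_pow_nat[OF assms] assms by (simp add: int_pow_neg_int)
qed

lemma core: assumes y: "y \<in> carrier G" and k: "k > (0::nat)" and yk: "y [^] k = D [^] (int k * a)"
  shows "\<exists>x\<in>carrier G. inv x \<otimes> y \<otimes> x = D [^] a"
proof -
  obtain e :: nat where e: "e > 0" "\<forall>x\<in>carrier G. D [^] e \<otimes> x = x \<otimes> D [^] e" using central by blast
  define N where "N = k * e"
  have N: "N > 0" unfolding N_def using k e by simp
  define oo where "oo n = y [^] (n::nat) \<otimes> D [^] (- (int n * a))" for n
  have oc: "oo n \<in> carrier G" for n unfolding oo_def using y Dc by simp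
  have Da: "D [^] a \<in> carrier G" "D [^] (-a) \<in> carrier G" using Dc by auto
  have step: "oo (Suc n) = y \<otimes> oo n \<otimes> D [^] (-a)" for n
  proof -
    have "D [^] (- (int (Suc n) * a)) = D [^] (- (int n * a)) \<otimes> D [^] (-a)"
      using Dc int_pow_mult[of D "- (int n * a)" "-a"] by (simp add: algebra_simps)
    moreover have "y [^] Suc n = y \<otimes> y [^] n" by (rule nat_pow_Suc2) (rule y)
    ultimately show ?thesis unfolding oo_def using y Dc by (simp only:) (simp add: m_assoc)
  qed
  have oN: "oo N = oo 0"
  proof -
    have "y [^] N = (y [^] k) [^] e" unfolding N_def using y by (simp add: nat_pow_pow)
    also have "\<dots> = (D [^] (int k * a)) [^] (int e)" using yk by (simp add: int_pow_int)
    also have "\<dots> = D [^] (int N * a)" using Dc by (simp add: int_pow_pow N_def algebra_simps)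
    finally have "y [^] N = D [^] (int N * a)" .
    thus ?thesis unfolding oo_def using Dc by (simp add: int_pow_neg)
  qed
  define S where "S = oo ` {..<N}"
  have S: "finite S" "S \<noteq> {}" "S \<subseteq> carrier G" unfolding S_def using N oc by auto
  have A: "\<exists>s'\<in>S. s = y \<otimes> s' \<otimes> D [^] (-a)" if s: "s \<in> S" for s
  proof -
    obtain n where n: "n < N" "s = oo n" using s unfolding S_def by auto
    show ?thesis
    proof (cases n)
      case 0
      hence "s = oo (Suc (N - 1))" using n oN N by simp
      hence "s = y \<otimes> oo (N - 1) \<otimes> D [^] (-a)" using step by simp
      moreover have "oo (N - 1) \<in> S" unfolding S_def using N by auto
      ultimately show ?thesis by blast
    next
      case (Suc m)
      thus ?thesis using step n unfolding S_def by auto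
    qed
  qed
  have B: "\<exists>s'\<in>S. s = inv y \<otimes> s' \<otimes> D [^] a" if s: "s \<in> S" for s
  proof -
    obtain n where n: "n < N" "s = oo n" using s unfolding S_def by auto
    have inv: "inv y \<otimes> oo (Suc n) \<otimes> D [^] a = oo n"
      unfolding step using y oc Da Dc by (simp add: m_assoc int_pow_neg)
    show ?thesis
    proof (cases "Suc n < N")
      case True
      hence "oo (Suc n) \<in> S" unfolding S_def by auto
      thus ?thesis using inv n(2) by (intro bexI[of _ "oo (Suc n)"]) auto
    next
      case False
      hence "Suc n = N" using n by simp
      hence "inv y \<otimes> oo 0 \<otimes> D [^] a = oo n" using inv oN by simp
      moreover have "oo 0 \<in> S" unfolding S_def using N by auto
      ultimately show ?thesis using n(2) by (intro bexI[of _ "oo 0"]) auto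
    qed
  qed
  obtain J where J: "J \<in> carrier G" "\<forall>s\<in>S. inv s \<otimes> J \<in> P"
    "\<forall>z\<in>carrier G. (\<forall>s\<in>S. inv s \<otimes> z \<in> P) \<longrightarrow> inv J \<otimes> z \<in> P"
    using L7[OF S] by blast
  have Sc: "s \<in> S \<Longrightarrow> s \<in> carrier G" for s using S by auto
  have ub1: "\<forall>s\<in>S. inv s \<otimes> (y \<otimes> J \<otimes> D [^] (-a)) \<in> P"
  proof
    fix s assume s: "s \<in> S"
    then obtain s' where s': "s' \<in> S" "s = y \<otimes> s' \<otimes> D [^] (-a)" using A by blast
    have sc: "s' \<in> carrier G" using s' Sc by auto
    have "inv s \<otimes> (y \<otimes> J \<otimes> D [^] (-a)) = D [^] a \<otimes> (inv s' \<otimes> J) \<otimes> inv (D [^] a)"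
      unfolding s'(2) using sc y J Dc by (simp add: inv_mult_group m_assoc int_pow_neg)
    thus "inv s \<otimes> (y \<otimes> J \<otimes> D [^] (-a)) \<in> P" using tauP J s' by simp
  qed
  have ub2: "\<forall>s\<in>S. inv s \<otimes> (inv y \<otimes> J \<otimes> D [^] a) \<in> P"
  proof
    fix s assume s: "s \<in> S"
    then obtain s' where s': "s' \<in> S" "s = inv y \<otimes> s' \<otimes> D [^] a" using B by blast
    have sc: "s' \<in> carrier G" using s' Sc by auto
    have "inv s \<otimes> (inv y \<otimes> J \<otimes> D [^] a) = D [^] (-a) \<otimes> (inv s' \<otimes> J) \<otimes> inv (D [^] (-a))"
      unfolding s'(2) using sc y J Dc by (simp add: inv_mult_group m_assoc int_pow_neg)
    thus "inv s \<otimes> (inv y \<otimes> J \<otimes> D [^] a) \<in> P" using tauP J s' by simp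
  qed
  have w1: "inv J \<otimes> (y \<otimes> J \<otimes> D [^] (-a)) \<in> P" using J ub1 y Da by simp
  have w2: "inv J \<otimes> (inv y \<otimes> J \<otimes> D [^] a) \<in> P" using J ub2 y Da by simp
  define u where "u = inv J \<otimes> y \<otimes> J"
  have uc: "u \<in> carrier G" unfolding u_def using J y by simp
  have e1: "inv J \<otimes> (y \<otimes> J \<otimes> D [^] (-a)) = u \<otimes> inv (D [^] a)"
    unfolding u_def using J y Dc by (simp add: m_assoc int_pow_neg)
  have e2: "D [^] a \<otimes> (inv J \<otimes> (inv y \<otimes> J \<otimes> D [^] a)) \<otimes> inv (D [^] a) = inv (u \<otimes> inv (D [^] a))"
    unfolding u_def using J y Dc by (simp add: m_assoc inv_mult_group)
  have "u \<otimes> inv (D [^] a) \<in> P" using w1 e1 by simp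
  moreover have "inv (u \<otimes> inv (D [^] a)) \<in> P" using tauP[OF w2, of a] e2 by simp
  ultimately have "u \<otimes> inv (D [^] a) = \<one>" using unitP by blast
  hence "u = D [^] a" using uc Dc by (metis Da(1) inv_closed inv_inv inv_equality)
  thus ?thesis using J unfolding u_def by blast
qed

end


context garside begin

lemma conjI': "h \<in> carrier G \<Longrightarrow> h \<otimes> x \<otimes> inv h = y \<Longrightarrow> conjugate G x y"
  unfolding conjugate_def by blast

lemma conj_sym: assumes "conjugate G x y" "x \<in> carrier G" shows "conjugate G y x"
proof -
  obtain h where h: "h \<in> carrier G" "h \<otimes> x \<otimes> inv h = y" using assms unfolding conjugate_def by blast
  have "inv h \<otimes> (h \<otimes> x \<otimes> inv h) \<otimes> inv (inv h) = x" using h(1) assms(2) by (simp add: m_assoc)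
  hence "inv h \<otimes> y \<otimes> inv (inv h) = x" using h(2) by simp
  thus ?thesis using h by (intro conjI'[of "inv h"]) auto
qed

lemma conj_trans: assumes "conjugate G x y" "conjugate G y z" "x \<in> carrier G" shows "conjugate G x z"
proof -
  obtain h where h: "h \<in> carrier G" "h \<otimes> x \<otimes> inv h = y" using assms unfolding conjugate_def by blast
  obtain h2 where h2: "h2 \<in> carrier G" "h2 \<otimes> y \<otimes> inv h2 = z" using assms unfolding conjugate_def by blast
  have "(h2 \<otimes> h) \<otimes> x \<otimes> inv (h2 \<otimes> h) = h2 \<otimes> (h \<otimes> x \<otimes> inv h) \<otimes> inv h2"
    using h(1) h2(1) assms(3) by (simp add: m_assoc inv_mult_group)
  hence "(h2 \<otimes> h) \<otimes> x \<otimes> inv (h2 \<otimes> h) = z" using h(2) h2(2) by simp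
  thus ?thesis using h h2 by (intro conjI'[of "h2 \<otimes> h"]) auto
qed

lemma conj_powI: assumes "conjugate G x y" "x \<in> carrier G" shows "conjugate G (x [^] (i::int)) (y [^] i)"
proof -
  obtain h where h: "h \<in> carrier G" "h \<otimes> x \<otimes> inv h = y" using assms unfolding conjugate_def by blast
  have "h \<otimes> x [^] i \<otimes> inv h = y [^] i" using conj_pow[OF h(1) assms(2), of i] h(2) by simp
  thus ?thesis using h by (intro conjI')
qed

lemma partI: fixes k a :: int assumes z: "z \<in> carrier G" and k: "k \<noteq> 0" and c: "conjugate G (z [^] k) (D [^] (k * a))"
  shows "conjugate G z (D [^] a)"
proof -
  obtain h where h: "h \<in> carrier G" "h \<otimes> z [^] k \<otimes> inv h = D [^] (k * a)"
    using c unfolding conjugate_def by blast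
  define y where "y = h \<otimes> z \<otimes> inv h"
  have yc: "y \<in> carrier G" unfolding y_def using h z by simp
  have yk: "y [^] k = D [^] (k * a)" unfolding y_def using conj_pow[OF h(1) z, of k] h(2) by simp
  have "\<exists>n::nat. n > 0 \<and> y [^] n = D [^] (int n * a)"
  proof (cases "k > 0")
    case True
    have "y [^] (nat k) = y [^] (int (nat k))" by (simp add: int_pow_int)
    also have "\<dots> = D [^] (int (nat k) * a)" using True yk by simp
    finally show ?thesis using True by (intro exI[of _ "nat k"]) simp
  next
    case False
    hence kn: "k < 0" using k by simp
    have "y [^] (nat (-k)) = y [^] (int (nat (-k)))" by (simp add: int_pow_int)
    also have "\<dots> = y [^] (- k)" using kn by simp
    also have "\<dots> = inv (D [^] (k * a))" using yk yc by (simp add: int_pow_neg)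
    also have "\<dots> = D [^] (- (k * a))" using Dc by (simp add: int_pow_neg)
    also have "\<dots> = D [^] (int (nat (-k)) * a)" using kn by simp
    finally show ?thesis using kn by (intro exI[of _ "nat (-k)"]) simp
  qed
  then obtain n :: nat where n: "n > 0" "y [^] n = D [^] (int n * a)" by blast
  obtain x where x: "x \<in> carrier G" "inv x \<otimes> y \<otimes> x = D [^] a" using core[OF yc n] by blast
  have "(inv x \<otimes> h) \<otimes> z \<otimes> inv (inv x \<otimes> h) = D [^] a"
    unfolding x(2)[symmetric] y_def using x h z by (simp add: m_assoc inv_mult_group)
  thus ?thesis using x h by (intro conjI'[of "inv x \<otimes> h"]) auto
qed

lemma comm_int_pow: assumes "c \<in> carrier G" "x \<in> carrier G" "c \<otimes> x = x \<otimes> c"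
  shows "c [^] (i::int) \<otimes> x = x \<otimes> c [^] i"
proof (cases "i \<ge> 0")
  case True
  then obtain n where "i = int n" by (metis nonneg_eq_int)
  thus ?thesis using group_commutes_pow[OF assms(3) assms(1,2), of n] by (simp add: int_pow_int)
next
  case False
  then obtain n where n: "i = - int n" by (metis nonneg_eq_int neg_0_le_iff_le minus_minus le_cases)
  have cn: "c [^] n \<otimes> x = x \<otimes> c [^] n" using group_commutes_pow[OF assms(3) assms(1,2), of n] .
  have "inv (c [^] n) \<otimes> x = x \<otimes> inv (c [^] n)"
  proof -
    have "inv (c [^] n) \<otimes> (c [^] n \<otimes> x) \<otimes> inv (c [^] n) = inv (c [^] n) \<otimes> (x \<otimes> c [^] n) \<otimes> inv (c [^] n)"
      using cn by simp
    thus ?thesis using assms by (simp add: m_assoc)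
  qed
  thus ?thesis unfolding n using assms by (simp add: int_pow_neg_int)
qed

lemma Dpow_conj: assumes "conjugate G (D [^] (p::int)) (D [^] q)" shows "p = q \<or> D = \<one>"
proof -
  obtain e :: nat where e: "e > 0" "\<forall>x\<in>carrier G. D [^] e \<otimes> x = x \<otimes> D [^] e" using central by blast
  obtain h where h: "h \<in> carrier G" "h \<otimes> D [^] p \<otimes> inv h = D [^] q" using assms unfolding conjugate_def by blast
  have cen: "D [^] (int e * i) \<otimes> x = x \<otimes> D [^] (int e * i)" if "x \<in> carrier G" for x i
  proof -
    have "(D [^] (int e)) [^] i \<otimes> x = x \<otimes> (D [^] (int e)) [^] i"
      using comm_int_pow[of "D [^] (int e)" x i] e(2) that Dc by (simp add: int_pow_int)
    thus ?thesis using Dc by (simp add: int_pow_pow)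
  qed
  have "h \<otimes> (D [^] p) [^] (int e) \<otimes> inv h = (D [^] q) [^] (int e)"
    using conj_pow[OF h(1), of "D [^] p" "int e"] h(2) Dc by simp
  hence "h \<otimes> D [^] (int e * p) \<otimes> inv h = D [^] (int e * q)" using Dc by (simp add: int_pow_pow mult.commute)
  moreover have "h \<otimes> D [^] (int e * p) \<otimes> inv h = D [^] (int e * p)"
  proof -
    have c: "h \<otimes> D [^] (int e * p) = D [^] (int e * p) \<otimes> h" using cen[OF h(1), of p] by simp
    have "h \<otimes> D [^] (int e * p) \<otimes> inv h = D [^] (int e * p) \<otimes> h \<otimes> inv h" by (simp only: c)
    thus ?thesis using h(1) Dc by (simp add: m_assoc)
  qed
  ultimately have eq: "D [^] (int e * p) = D [^] (int e * q)" by simp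
  show ?thesis
  proof (cases "p = q")
    case True thus ?thesis by simp
  next
    case False
    define t where "t = int e * p - int e * q"
    have t0: "t \<noteq> 0" unfolding t_def using False e(1) by simp
    have Dt: "D [^] t = \<one>" unfolding t_def using eq Dc by (simp add: int_pow_diff)
    have Dmt: "D [^] (- t) = \<one>" using Dt Dc by (simp add: int_pow_neg)
    obtain n :: nat where n: "n > 0" "D [^] n = \<one>"
    proof (cases "t > 0")
      case True
      thus ?thesis using that[of "nat t"] Dt by (simp add: int_pow_int[symmetric])
    next
      case False
      thus ?thesis using that[of "nat (-t)"] Dmt t0 by (simp add: int_pow_int[symmetric])
    qed
    have "D \<otimes> D [^] (n - 1) = \<one>" using n Dc nat_pow_Suc2[of D "n - 1"] by simp
    hence "inv D = D [^] (n - 1)" using Dc by (metis inv_equality nat_pow_closed nat_pow_comm nat_pow_Suc2 nat_pow_Suc)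
    hence "inv D \<in> P" using powP by simp
    thus ?thesis using unitP DP by blast
  qed
qed

lemma triv: assumes "D = \<one>" shows "carrier G = {\<one>}"
proof -
  have dv: "s = \<one>" if "s \<in> Dv" for s
  proof -
    have "left_div G P s \<one>" using that assms by simp
    then obtain c where c: "c \<in> P" "\<one> = s \<otimes> c" "s \<in> P" unfolding left_div_def by blast
    have "inv s = c" using c Pc by (metis inv_equality l_inv r_one inv_closed m_assoc l_one)
    thus ?thesis using unitP c by simp
  qed
  have pp: "p = \<one>" if pP: "p \<in> P" for p
  proof -
    obtain xs where xs: "set xs \<subseteq> Dv" "p = foldr (\<otimes>) xs \<one>" using gen pP by blast
    have dv': "left_div G P s D \<Longrightarrow> s = \<one>" for s using dv by simp
    have "foldr (\<otimes>) xs \<one> = \<one>" using xs(1) by (induction xs) (auto dest!: dv')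
    thus ?thesis using xs by simp
  qed
  show ?thesis
  proof
    show "carrier G \<subseteq> {\<one>}"
    proof
      fix x assume "x \<in> carrier G"
      then obtain p q where pq: "p \<in> P" "q \<in> P" "x = p \<otimes> inv q" using carr by blast
      have "p = \<one>" "q = \<one>" using pp pq by auto
      thus "x \<in> {\<one>}" using pq by simp
    qed
  qed simp
qed

end



context garside begin
lemma mainL:
  fixes g :: 'a and a b k :: int
  assumes "g \<in> carrier G"
    and "a \<noteq> 0" and "b \<noteq> 0" and "k \<noteq> 0"
  shows "(conjugate G (g [^] (k * b)) (D [^] (k * a))
            \<longrightarrow> conjugate G (g [^] b) (D [^] a))
       \<and> ((\<exists>m::int. conjugate G (g [^] a) (D [^] m)) \<and>
          (\<exists>m::int. conjugate G (g [^] b) (D [^] m))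
            \<longrightarrow> (\<exists>m::int. conjugate G (g [^] gcd a b) (D [^] m)))"
proof -
  have g: "g \<in> carrier G" by (rule assms(1))
  have pw: "(g [^] c) [^] d = g [^] (c * d)" for c d :: int using g by (simp add: int_pow_pow)
  have I: "conjugate G (g [^] (k * b)) (D [^] (k * a)) \<longrightarrow> conjugate G (g [^] b) (D [^] a)"
  proof
    assume "conjugate G (g [^] (k * b)) (D [^] (k * a))"
    hence "conjugate G ((g [^] b) [^] k) (D [^] (k * a))" using pw[of b k] by (simp add: mult.commute)
    thus "conjugate G (g [^] b) (D [^] a)" using partI[of "g [^] b" k a] g assms(4) by simp
  qed
  have II: "(\<exists>m::int. conjugate G (g [^] a) (D [^] m)) \<and> (\<exists>m::int. conjugate G (g [^] b) (D [^] m))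
            \<longrightarrow> (\<exists>m::int. conjugate G (g [^] gcd a b) (D [^] m))"
  proof
    assume "(\<exists>m::int. conjugate G (g [^] a) (D [^] m)) \<and> (\<exists>m::int. conjugate G (g [^] b) (D [^] m))"
    then obtain m1 m2 :: int where m1: "conjugate G (g [^] a) (D [^] m1)" and m2: "conjugate G (g [^] b) (D [^] m2)"
      by blast
    show "\<exists>m::int. conjugate G (g [^] gcd a b) (D [^] m)"
    proof (cases "D = \<one>")
      case True
      hence cG: "carrier G = {\<one>}" by (rule triv)
      have "g [^] gcd a b = \<one>" using cG g by auto
      moreover have "conjugate G \<one> (D [^] (0::int))" by (intro conjI'[of \<one>]) auto
      ultimately have "conjugate G (g [^] gcd a b) (D [^] (0::int))" by simp
      thus ?thesis by blast
    next
      case False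
      define d where "d = gcd a b"
      define a' where "a' = a div d"
      define b' where "b' = b div d"
      have ad: "a = d * a'" unfolding a'_def d_def by simp
      have bd: "b = d * b'" unfolding b'_def d_def by simp
      have cop: "coprime a' b'" unfolding a'_def b'_def d_def using assms(2) by (intro div_gcd_coprime) simp
      have a'0: "a' \<noteq> 0" using ad assms(2) by auto
      have c1: "conjugate G (g [^] (a * b')) (D [^] (m1 * b'))"
        using conj_powI[OF m1, of b'] g pw[of a b'] Dc by (simp add: int_pow_pow)
      have c2: "conjugate G (g [^] (b * a')) (D [^] (m2 * a'))"
        using conj_powI[OF m2, of a'] g pw[of b a'] Dc by (simp add: int_pow_pow)
      have "a * b' = b * a'" unfolding ad bd by simp
      hence "conjugate G (D [^] (m1 * b')) (g [^] (b * a'))" using conj_sym[OF c1] g by simp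
      hence "conjugate G (D [^] (m1 * b')) (D [^] (m2 * a'))" using conj_trans[OF _ c2] Dc by simp
      hence "m1 * b' = m2 * a'" using Dpow_conj False by blast
      hence "a' dvd m1 * b'" by simp
      hence "a' dvd m1" using coprime_dvd_mult_left_iff[OF cop] by simp
      then obtain c where c: "m1 = a' * c" by blast
      have "conjugate G ((g [^] d) [^] a') (D [^] (a' * c))" using m1 pw[of d a'] ad c by simp
      hence "conjugate G (g [^] d) (D [^] c)" using partI[of "g [^] d" a' c] g a'0 by simp
      thus ?thesis unfolding d_def by blast
    qed
  qed
  show ?thesis using I II by blast
qed
end

theorem mainTheorem6:
  fixes G :: "('a, 'b) monoid_scheme" and P :: "'a set" and D g :: 'a and a b k :: int
  assumes "garside_group G P D" and "g \<in> carrier G"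
    and "a \<noteq> 0" and "b \<noteq> 0" and "k \<noteq> 0"
  shows "(conjugate G (g [^]\<^bsub>G\<^esub> (k * b)) (D [^]\<^bsub>G\<^esub> (k * a))
            \<longrightarrow> conjugate G (g [^]\<^bsub>G\<^esub> b) (D [^]\<^bsub>G\<^esub> a))
       \<and> ((\<exists>m::int. conjugate G (g [^]\<^bsub>G\<^esub> a) (D [^]\<^bsub>G\<^esub> m)) \<and>
          (\<exists>m::int. conjugate G (g [^]\<^bsub>G\<^esub> b) (D [^]\<^bsub>G\<^esub> m))
            \<longrightarrow> (\<exists>m::int. conjugate G (g [^]\<^bsub>G\<^esub> gcd a b) (D [^]\<^bsub>G\<^esub> m)))"
  by (rule garside.mainL[OF garside.intro[OF assms(1)] assms(2-5)])


end
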